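(* Let $h>k>2$ be integers and let $G$ be the graph with vertex set $\{0,1,\dots,2^h\}$ whose edge multiset consists of $k$ parallel edges between $i-1$ and $i$ for each $1\le i\le 2^h$, together with one edge $\{j2^i,(j+1)2^i\}$ for each $1\le i\le h$ and each $0\le j<2^{h-i}$. Then $$\inf\Big\{\max_{\emptyset\ne S\subsetneq V}\frac{1}{|E(S,\overline S)|}\sum_{e\in E(S,\overline S)}\mathcal R_D(e)\ :\ D\succ0,\ D\preceq_\square L_G\Big\}\ \ge\ \frac{h^2}{8(h+k)^2}.$$
   Context: $E(S,\overline S)$ is the multiset of edges with exactly one endpoint in $S$ (averages count parallel edges with multiplicity). For each edge $e=\{u,v\}$ fix an orientation, $\chi_e=\mathbf 1_u-\mathbf 1_v$, $L_G=\sum_e\chi_e\chi_e^\intercal$, $\mathcal R_D(e)=\chi_e^\intercal D^{-1}\chi_e$ for symmetric positive definite $D$; $A\preceq_\square B$ means $\mathbf 1_S^\intercal A\mathbf 1_S\le\mathbf 1_S^\intercal B\mathbf 1_S$ for all $\emptyset\ne S\subsetneq V$. *)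

theory Defs
  imports "Jordan_Normal_Form.Gauss_Jordan_Elimination"
begin

(* Vertices of the graph are 0..N, N = 2^h, i.e. indices 0..<nV with nV = 2^h + 1.
   Edges are oriented pairs (u,v); the edge multiset is represented as a list. *)

definition nV :: "nat \<Rightarrow> nat" where
  "nV h = 2 ^ h + 1"

definition G_edges :: "nat \<Rightarrow> nat \<Rightarrow> (nat \<times> nat) list" where
  "G_edges h k =
     concat (map (\<lambda>i. replicate k (i - 1, i)) [1..<2 ^ h + 1]) @
     concat (map (\<lambda>i. map (\<lambda>j. (j * 2 ^ i, (j + 1) * 2 ^ i)) [0..<2 ^ (h - i)]) [1..<h + 1])"

definition chi :: "nat \<Rightarrow> nat \<times> nat \<Rightarrow> real vec" where
  "chi n e = vec n (\<lambda>i. (if i = fst e then 1 else 0) - (if i = snd e then 1 else 0))"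

definition ind :: "nat \<Rightarrow> nat set \<Rightarrow> real vec" where
  "ind n S = vec n (\<lambda>i. if i \<in> S then 1 else 0)"

definition laplacian :: "nat \<Rightarrow> (nat \<times> nat) list \<Rightarrow> real mat" where
  "laplacian n E = mat n n (\<lambda>(i, j). sum_list (map (\<lambda>e. chi n e $ i * chi n e $ j) E))"

definition sym_pos_def :: "nat \<Rightarrow> real mat \<Rightarrow> bool" where
  "sym_pos_def n D \<longleftrightarrow> D \<in> carrier_mat n n \<and> D\<^sup>T = D \<and>
     (\<forall>x \<in> carrier_vec n. x \<noteq> 0\<^sub>v n \<longrightarrow> x \<bullet> (D *\<^sub>v x) > 0)"

definition cut_le :: "nat \<Rightarrow> real mat \<Rightarrow> real mat \<Rightarrow> bool" where
  "cut_le n A B \<longleftrightarrow> (\<forall>S. S \<subseteq> {0..<n} \<and> S \<noteq> {} \<and> S \<noteq> {0..<n} \<longrightarrow>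
      ind n S \<bullet> (A *\<^sub>v ind n S) \<le> ind n S \<bullet> (B *\<^sub>v ind n S))"

definition Rres :: "nat \<Rightarrow> real mat \<Rightarrow> nat \<times> nat \<Rightarrow> real" where
  "Rres n D e = chi n e \<bullet> (the (mat_inverse D) *\<^sub>v chi n e)"

definition cut_edges :: "nat set \<Rightarrow> (nat \<times> nat) list \<Rightarrow> (nat \<times> nat) list" where
  "cut_edges S E = filter (\<lambda>e. (fst e \<in> S) \<noteq> (snd e \<in> S)) E"

definition cut_avg :: "nat \<Rightarrow> real mat \<Rightarrow> (nat \<times> nat) list \<Rightarrow> nat set \<Rightarrow> real" where
  "cut_avg n D E S = sum_list (map (Rres n D) (cut_edges S E)) / real (length (cut_edges S E))"

end

theory Submission
  imports Defs "Jordan_Normal_Form.Determinant"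
begin



lemma sym_form:
  fixes D :: "real mat"
  assumes D: "D \<in> carrier_mat n n" and T: "D\<^sup>T = D" and x: "x \<in> carrier_vec n" and y: "y \<in> carrier_vec n"
  shows "x \<bullet> (D *\<^sub>v y) = y \<bullet> (D *\<^sub>v x)"
proof -
  have Dij: "D $$ (i,j) = D $$ (j,i)" if "i < n" "j < n" for i j
    using T D that by (metis carrier_matD index_transpose_mat(1))
  have "x \<bullet> (D *\<^sub>v y) = (\<Sum>i<n. x $ i * (\<Sum>j<n. D $$ (i,j) * y $ j))"
    using D x y by (auto simp: scalar_prod_def mult_mat_vec_def row_def atLeast0LessThan intro!: sum.cong)
  also have "\<dots> = (\<Sum>i<n. \<Sum>j<n. x $ i * D $$ (i,j) * y $ j)"
    by (simp add: sum_distrib_left mult.assoc)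
  also have "\<dots> = (\<Sum>j<n. \<Sum>i<n. x $ i * D $$ (i,j) * y $ j)" by (rule sum.swap)
  also have "\<dots> = (\<Sum>j<n. y $ j * (\<Sum>i<n. D $$ (j,i) * x $ i))"
    by (auto simp: sum_distrib_left Dij intro!: sum.cong)
  also have "\<dots> = y \<bullet> (D *\<^sub>v x)"
    using D x y by (auto simp: scalar_prod_def mult_mat_vec_def row_def atLeast0LessThan intro!: sum.cong)
  finally show ?thesis .
qed

lemma inv_exists:
  fixes D :: "real mat"
  assumes sp: "sym_pos_def n D"
  shows "\<exists>B. mat_inverse D = Some B \<and> D * B = 1\<^sub>m n \<and> B \<in> carrier_mat n n"
proof -
  have D: "D \<in> carrier_mat n n" using sp by (simp add: sym_pos_def_def)
  have "det D \<noteq> 0"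
  proof
    assume "det D = 0"
    then obtain v where v: "v \<in> carrier_vec n" "v \<noteq> 0\<^sub>v n" "D *\<^sub>v v = 0\<^sub>v n"
      using det_0_iff_vec_prod_zero_field[OF D] by blast
    have "v \<bullet> (D *\<^sub>v v) > 0" using sp v(1,2) unfolding sym_pos_def_def by blast
    with v show False by simp
  qed
  then have "D \<in> Units (ring_mat TYPE(real) n ())" by (rule det_non_zero_imp_unit[OF D])
  then have "mat_inverse D \<noteq> None" using mat_inverse(1)[OF D, of "()"] by blast
  then obtain B where "mat_inverse D = Some B" by blast
  with mat_inverse(2)[OF D this] show ?thesis by blast
qed

lemma inv_lower:
  fixes D :: "real mat"
  assumes sp: "sym_pos_def n D" and c: "c \<in> carrier_vec n" and z: "z \<in> carrier_vec n"
  shows "c \<bullet> (the (mat_inverse D) *\<^sub>v c) \<ge> 2*(c \<bullet> z) - z \<bullet> (D *\<^sub>v z)"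
proof -
  have D: "D \<in> carrier_mat n n" and T: "D\<^sup>T = D" using sp by (auto simp add: sym_pos_def_def)
  obtain B where B: "mat_inverse D = Some B" "D * B = 1\<^sub>m n" "B \<in> carrier_mat n n"
    using inv_exists[OF sp] by blast
  define w where "w = B *\<^sub>v c"
  have w: "w \<in> carrier_vec n" using B c by (simp add: w_def)
  have Dw: "D *\<^sub>v w = c" unfolding w_def using B D c
    by (metis assoc_mult_mat_vec one_mult_mat_vec)
  have wz: "w - z \<in> carrier_vec n" using w z by simp
  have nn: "(w - z) \<bullet> (D *\<^sub>v (w - z)) \<ge> 0"
    using sp wz by (cases "w - z = 0\<^sub>v n") (auto simp: sym_pos_def_def less_imp_le)
  have e1: "D *\<^sub>v (w - z) = c - D *\<^sub>v z" using D w z Dw by (metis mult_minus_distrib_mat_vec)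
  have "(w - z) \<bullet> (D *\<^sub>v (w - z)) = w \<bullet> c - w \<bullet> (D *\<^sub>v z) - (z \<bullet> c - z \<bullet> (D *\<^sub>v z))"
    unfolding e1 using w z c D
    by (simp add: minus_scalar_prod_distrib scalar_prod_minus_distrib)
  moreover have "w \<bullet> (D *\<^sub>v z) = z \<bullet> c" using sym_form[OF D T w z] Dw by simp
  moreover have "w \<bullet> c = c \<bullet> w" using w c by (simp add: comm_scalar_prod)
  moreover have "z \<bullet> c = c \<bullet> z" using z c by (simp add: comm_scalar_prod)
  ultimately show ?thesis using nn B(1) w_def by simp
qed



lemma sum_list_concat': "sum_list (concat xss) = sum_list (map sum_list (xss :: real list list))"
  by (induct xss) auto

definition ed :: "nat \<Rightarrow> nat \<Rightarrow> nat \<times> nat" where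
  "ed i j = (j * 2 ^ i, (j + 1) * 2 ^ i)"

lemma G_edges_split: "G_edges h k =
     concat (map (\<lambda>i. replicate k (i - 1, i)) [1..<2 ^ h + 1]) @
     concat (map (\<lambda>i. map (ed i) [0..<2 ^ (h - i)]) [1..<h + 1])"
proof -
  have "ed i = (\<lambda>j. (j * 2 ^ i, (j + 1) * 2 ^ i))" for i by (rule ext) (simp add: ed_def)
  then show ?thesis by (simp only: G_edges_def)
qed

lemma cross_unique:
  assumes "j1 * 2^i < t" "t \<le> (j1+1) * 2^i" "j2 * 2^i < (t::nat)" "t \<le> (j2+1) * 2^i"
  shows "j1 = j2"
proof (rule ccontr)
  assume "j1 \<noteq> j2"
  then consider "j1 < j2" | "j2 < j1" by linarith
  then show False
  proof cases
    case 1 then have "(j1+1) * 2^i \<le> j2 * 2^i" by (intro mult_right_mono) auto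
    with assms show False by linarith
  next
    case 2 then have "(j2+1) * 2^i \<le> j1 * 2^i" by (intro mult_right_mono) auto
    with assms show False by linarith
  qed
qed

lemma len_level:
  "length (filter (\<lambda>e. (fst e \<in> {0..<t}) \<noteq> (snd e \<in> {0..<t})) (map (ed i) [0..<M])) \<le> 1"
proof -
  let ?P = "\<lambda>e. (fst e \<in> {0..<t}) \<noteq> (snd e \<in> {0..<t})"
  have "length (filter ?P (map (ed i) [0..<M])) = card {j. j < M \<and> ?P (ed i j)}"
    unfolding length_filter_conv_card by (rule arg_cong[where f=card]) auto
  also have "\<dots> \<le> 1"
  proof -
    have "\<forall>x\<in>{j. j < M \<and> ?P (ed i j)}. \<forall>y\<in>{j. j < M \<and> ?P (ed i j)}. x = y"
    proof (intro ballI)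
      fix x y assume "x \<in> {j. j < M \<and> ?P (ed i j)}" "y \<in> {j. j < M \<and> ?P (ed i j)}"
      then have "x * 2^i < t" "t \<le> (x+1) * 2^i" "y * 2^i < t" "t \<le> (y+1) * 2^i"
        by (auto simp: ed_def split: if_splits)
      then show "x = y" by (rule cross_unique)
    qed
    then show ?thesis using card_le_Suc0_iff_eq[of "{j. j < M \<and> ?P (ed i j)}"] by auto
  qed
  finally show ?thesis .
qed

lemma len_unit:
  assumes "1 \<le> t" "t \<le> N"
  shows "length (filter (\<lambda>e. (fst e \<in> {0..<t}) \<noteq> (snd e \<in> {0..<t}))
           (concat (map (\<lambda>i. replicate k (i - 1, i)) [1..<N + 1]))) = k"
proof -
  let ?P = "\<lambda>e. (fst e \<in> {0..<t}) \<noteq> (snd e \<in> {0..<t})"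
  have "length (filter ?P (concat (map (\<lambda>i. replicate k (i - 1, i)) [1..<N + 1])))
      = sum_list (map (\<lambda>i. length (filter ?P (replicate k (i - 1, i)))) [1..<N + 1])"
    by (simp add: filter_concat length_concat comp_def)
  also have "\<dots> = (\<Sum>i\<in>{1..<N+1}. length (filter ?P (replicate k (i - 1, i))))"
    by (simp only: sum_set_upt_conv_sum_list_nat[symmetric] set_upt)
  also have "\<dots> = (\<Sum>i\<in>{1..<N+1}. if i = t then k else 0)"
  proof (rule sum.cong[OF refl])
    fix i assume "i \<in> {1..<N+1}"
    then show "length (filter ?P (replicate k (i - 1, i))) = (if i = t then k else 0)"
      by (cases "i = t") (auto simp: filter_replicate)
  qed
  also have "\<dots> = k" using assms by simp
  finally show ?thesis .
qed

lemma len_cut: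
  assumes "1 \<le> t" "t \<le> 2^h"
  shows "length (cut_edges {0..<t} (G_edges h k)) \<le> h + k"
proof -
  let ?P = "\<lambda>e. (fst e \<in> {0..<t}) \<noteq> (snd e \<in> {0..<t})"
  have "length (filter ?P (concat (map (\<lambda>i. map (ed i) [0..<2 ^ (h - i)]) [1..<h + 1])))
      = sum_list (map (\<lambda>i. length (filter ?P (map (ed i) [0..<2 ^ (h - i)]))) [1..<h + 1])"
    by (simp add: filter_concat length_concat comp_def)
  also have "\<dots> = (\<Sum>i\<in>{1..<h+1}. length (filter ?P (map (ed i) [0..<2 ^ (h - i)])))"
    by (simp add: sum_set_upt_conv_sum_list_nat[symmetric])
  also have "\<dots> \<le> (\<Sum>i\<in>{1..<h+1}. 1)" by (intro sum_mono len_level)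
  also have "\<dots> = h" by simp
  finally have "length (filter ?P (concat (map (\<lambda>i. map (ed i) [0..<2 ^ (h - i)]) [1..<h + 1]))) \<le> h" .
  then show ?thesis unfolding cut_edges_def G_edges_split filter_append length_append
    using len_unit[OF assms, of k] by linarith
qed

lemma sum_cut_lower:
  fixes R :: "nat \<times> nat \<Rightarrow> real"
  assumes nn: "\<And>e. R e \<ge> 0" and s: "s < 2^h"
  shows "sum_list (map R (cut_edges {0..<Suc s} (G_edges h k))) \<ge> (\<Sum>i\<in>{1..<h}. R (ed i (s div 2^i)))"
proof -
  let ?P = "\<lambda>e. (fst e \<in> {0..<Suc s}) \<noteq> (snd e \<in> {0..<Suc s})"
  let ?L = "concat (map (\<lambda>i. map (ed i) [0..<2 ^ (h - i)]) [1..<h + 1])"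
  have lev: "R (ed i (s div 2^i)) \<le> sum_list (map R (filter ?P (map (ed i) [0..<2 ^ (h - i)])))"
    if i: "1 \<le> i" "i < h" for i
  proof -
    have "s div 2^i < 2^(h-i)"
    proof -
      have "s < 2^(h-i) * 2^i" using s i by (simp add: power_add[symmetric])
      then show ?thesis by (simp add: div_less_iff_less_mult)
    qed
    moreover have "?P (ed i (s div 2^i))"
    proof -
      have a: "s div 2^i * 2^i \<le> s" using mod_div_mult_eq[of s "2^i"] by linarith
      have m: "s mod 2^i < 2^i" by simp
      have e: "(s div 2^i + 1) * 2^i = s div 2^i * 2^i + 2^i" by simp
      have b: "s < (s div 2^i + 1) * 2^i"
        using mod_div_mult_eq[of s "2^i"] m e by linarith
      have "fst (ed i (s div 2^i)) < Suc s" "\<not> snd (ed i (s div 2^i)) < Suc s"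
        using a b unfolding ed_def fst_conv snd_conv by linarith+
      then show ?thesis by simp
    qed
    ultimately have "ed i (s div 2^i) \<in> set (filter ?P (map (ed i) [0..<2 ^ (h - i)]))" by auto
    then have "R (ed i (s div 2^i)) \<in> set (map R (filter ?P (map (ed i) [0..<2 ^ (h - i)])))" by auto
    then show ?thesis by (rule Groups_List.member_le_sum_list) (auto intro: nn)
  qed
  have "(\<Sum>i\<in>{1..<h}. R (ed i (s div 2^i))) \<le> (\<Sum>i\<in>{1..<h}. sum_list (map R (filter ?P (map (ed i) [0..<2 ^ (h - i)]))))"
    by (intro sum_mono lev) auto
  also have "\<dots> \<le> (\<Sum>i\<in>{1..<h+1}. sum_list (map R (filter ?P (map (ed i) [0..<2 ^ (h - i)]))))"
    by (rule sum_mono2) (auto intro!: sum_list_nonneg nn)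
  also have "\<dots> = sum_list (map (\<lambda>i. sum_list (map R (filter ?P (map (ed i) [0..<2 ^ (h - i)])))) [1..<h+1])"
    by (simp only: sum_set_upt_conv_sum_list_nat[symmetric] set_upt)
  also have "\<dots> = sum_list (map R (filter ?P ?L))"
    by (simp only: filter_concat map_concat sum_list_concat' map_map comp_def)
  also have "\<dots> \<le> sum_list (map R (cut_edges {0..<Suc s} (G_edges h k)))"
  proof -
    let ?U = "concat (map (\<lambda>i. replicate k (i - 1, i)) [1..<2 ^ h + 1])"
    have "0 \<le> sum_list (map R (filter ?P ?U))" by (rule sum_list_nonneg) (auto intro: nn)
    then show ?thesis unfolding cut_edges_def G_edges_split filter_append map_append sum_list_append
      by linarith
  qed
  finally show ?thesis .
qed




definition qf :: "nat \<Rightarrow> real mat \<Rightarrow> (nat \<Rightarrow> real) \<Rightarrow> real" where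
  "qf n D f = (\<Sum>u<n. \<Sum>v<n. f u * D $$ (u,v) * f v)"

lemma qf_vec: assumes D: "D \<in> carrier_mat n n"
  shows "vec n f \<bullet> (D *\<^sub>v vec n f) = qf n D f"
  using D by (auto simp: qf_def scalar_prod_def mult_mat_vec_def row_def atLeast0LessThan
      sum_distrib_left mult.assoc intro!: sum.cong)

lemma qf_parallel: "qf n D (\<lambda>v. a v - b v) = 2 * qf n D a + 2 * qf n D b - qf n D (\<lambda>v. a v + b v)"
proof -
  have "qf n D (\<lambda>v. a v - b v) + qf n D (\<lambda>v. a v + b v) = 2 * qf n D a + 2 * qf n D b"
    unfolding qf_def sum.distrib[symmetric] sum_distrib_left
    by (intro sum.cong refl) (simp add: algebra_simps)
  then show ?thesis by linarith
qed

lemma qf_scale: "qf n D (\<lambda>v. c * a v) = c^2 * qf n D a"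
  unfolding qf_def sum_distrib_left by (intro sum.cong refl) (simp add: algebra_simps power2_eq_square)

lemma qf_neg: "qf n D (\<lambda>v. a v - b v) = qf n D (\<lambda>v. b v - a v)"
  unfolding qf_def by (intro sum.cong refl) (simp add: algebra_simps)

lemma chi_dot: assumes "a < n" "b < n" "x \<in> carrier_vec n"
  shows "chi n (a,b) \<bullet> x = x $ a - x $ b"
proof -
  have "chi n (a,b) \<bullet> x = (\<Sum>i<n. ((if i = a then 1 else 0) - (if i = b then 1 else 0)) * x $ i)"
    using assms by (auto simp: chi_def scalar_prod_def atLeast0LessThan intro!: sum.cong)
  also have "\<dots> = (\<Sum>i<n. (if i = a then x $ i else 0) - (if i = b then x $ i else 0))"
    by (intro sum.cong refl) auto
  also have "\<dots> = (\<Sum>i<n. (if i = a then x $ i else 0)) - (\<Sum>i<n. (if i = b then x $ i else 0))"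
    by (rule sum_subtractf)
  also have "\<dots> = x $ a - x $ b" using assms by simp
  finally show ?thesis .
qed

lemma quad_sum:
  fixes x :: "nat \<Rightarrow> real"
  shows "(\<Sum>i<n. x i * (\<Sum>j<n. (\<Sum>m<M. c m i * c m j) * x j)) = (\<Sum>m<M. (\<Sum>i<n. c m i * x i)^2)"
proof -
  have "(\<Sum>i<n. x i * (\<Sum>j<n. (\<Sum>m<M. c m i * c m j) * x j)) = (\<Sum>i<n. \<Sum>j<n. \<Sum>m<M. c m i * x i * (c m j * x j))"
    by (simp add: sum_distrib_left sum_distrib_right mult_ac)
  also have "\<dots> = (\<Sum>i<n. \<Sum>m<M. \<Sum>j<n. c m i * x i * (c m j * x j))"
    by (intro sum.cong refl sum.swap)
  also have "\<dots> = (\<Sum>m<M. \<Sum>i<n. \<Sum>j<n. c m i * x i * (c m j * x j))"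
    by (rule sum.swap)
  also have "\<dots> = (\<Sum>m<M. (\<Sum>i<n. c m i * x i)^2)"
    by (simp add: power2_eq_square sum_product)
  finally show ?thesis .
qed

lemma sum_list_ind: "sum_list (map (\<lambda>e. if P e then 1 else 0) E) = real (length (filter P E))"
  by (induct E) auto

lemma lap_ind:
  assumes E: "\<forall>e\<in>set E. fst e < n \<and> snd e < n" and S: "S \<subseteq> {0..<n}"
  shows "ind n S \<bullet> (laplacian n E *\<^sub>v ind n S) = real (length (cut_edges S E))"
proof -
  define x where "x i = (if i \<in> S then 1 else (0::real))" for i
  define c where "c m i = chi n (E ! m) $ i" for m i
  have "ind n S \<bullet> (laplacian n E *\<^sub>v ind n S) = (\<Sum>i<n. x i * (\<Sum>j<n. (\<Sum>m<length E. c m i * c m j) * x j))"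
    by (auto simp: ind_def laplacian_def scalar_prod_def mult_mat_vec_def row_def atLeast0LessThan
        x_def c_def sum_list_sum_nth intro!: sum.cong)
  also have "\<dots> = (\<Sum>m<length E. (\<Sum>i<n. c m i * x i)^2)" by (rule quad_sum)
  also have "\<dots> = (\<Sum>m<length E. (chi n (E ! m) \<bullet> ind n S)^2)"
    by (auto simp: c_def x_def scalar_prod_def ind_def atLeast0LessThan intro!: sum.cong)
  also have "\<dots> = (\<Sum>m<length E. if (fst (E!m) \<in> S) \<noteq> (snd (E!m) \<in> S) then 1 else 0)"
  proof (intro sum.cong refl)
    fix m assume "m \<in> {..<length E}"
    then have m: "fst (E!m) < n" "snd (E!m) < n" using E by auto
    have "chi n (E ! m) \<bullet> ind n S = ind n S $ fst (E!m) - ind n S $ snd (E!m)"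
      using chi_dot[OF m, of "ind n S"] by (simp add: ind_def)
    then show "(chi n (E ! m) \<bullet> ind n S)^2 = (if (fst (E!m) \<in> S) \<noteq> (snd (E!m) \<in> S) then 1 else 0)"
      using m by (auto simp: ind_def)
  qed
  also have "\<dots> = sum_list (map (\<lambda>e. if (fst e \<in> S) \<noteq> (snd e \<in> S) then 1 else 0) E)"
    by (simp add: sum_list_sum_nth atLeast0LessThan)
  also have "\<dots> = real (length (cut_edges S E))" by (simp add: sum_list_ind cut_edges_def)
  finally show ?thesis .
qed




lemma sum_div_group:
  fixes f :: "nat \<Rightarrow> real" assumes p: "p > 0"
  shows "(\<Sum>s<m*p. f (s div p)) = real p * (\<Sum>j<m. f j)"
proof -
  have "(\<Sum>s<m*p. f (s div p)) = (\<Sum>j<m. \<Sum>s\<in>{j*p..<j*p+p}. f (s div p))"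
    by (rule sum.nat_group[symmetric])
  also have "\<dots> = (\<Sum>j<m. \<Sum>s\<in>{j*p..<j*p+p}. f j)"
  proof (intro sum.cong refl)
    fix j s assume "s \<in> {j*p..<j*p+p}"
    then have "p * j \<le> s" "s < p * Suc j" by (auto simp: mult.commute)
    then have "s div p = j" by (rule div_nat_eqI)
    then show "f (s div p) = f j" by simp
  qed
  also have "\<dots> = real p * (\<Sum>j<m. f j)" by (simp add: sum_distrib_left)
  finally show ?thesis .
qed

lemma sum_pairs:
  fixes g :: "nat \<Rightarrow> real"
  shows "(\<Sum>j<2*M. g j) = (\<Sum>m<M. g (2*m) + g (2*m+1))"
proof -
  have "(\<Sum>j<M*2. g j) = (\<Sum>m<M. \<Sum>s\<in>{m*2..<m*2+2}. g s)"
    by (rule sum.nat_group[symmetric])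
  also have "\<dots> = (\<Sum>m<M. g (2*m) + g (2*m+1))"
    by (intro sum.cong refl) (simp add: numeral_2_eq_2 mult.commute)
  finally show ?thesis by (simp add: mult.commute)
qed

lemma telescope:
  fixes F :: "nat \<Rightarrow> real"
  shows "1 \<le> h \<Longrightarrow> (\<Sum>i\<in>{1..<h}. F i - F (Suc i)) = F 1 - F h"
  by (induct h) (auto simp: le_Suc_eq)

definition cnt :: "nat \<Rightarrow> nat \<Rightarrow> nat \<Rightarrow> real" where
  "cnt i j v = (\<Sum>t\<in>{j*2^i<..(j+1)*2^i}. if v < t then 1 else 0)"

lemma cnt_hi: "v \<le> j*2^i \<Longrightarrow> cnt i j v = 2^i"
proof -
  assume v: "v \<le> j*2^i"
  have "cnt i j v = (\<Sum>t\<in>{j*2^i<..(j+1)*2^i}. 1)"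
    unfolding cnt_def by (intro sum.cong refl) (use v in auto)
  also have "\<dots> = 2^i" by simp
  finally show ?thesis .
qed

lemma cnt_lo: "(j+1)*2^i \<le> v \<Longrightarrow> cnt i j v = 0"
  unfolding cnt_def by (intro sum.neutral) auto

lemma cnt_split: "cnt (Suc i) j v = cnt i (2*j) v + cnt i (2*j+1) v"
proof -
  have eq: "{j*2^Suc i<..(j+1)*2^Suc i} = {2*j*2^i<..(2*j+1)*2^i} \<union> {(2*j+1)*2^i<..(2*j+1+1)*2^i}"
    by auto
  show ?thesis unfolding cnt_def eq
    by (rule sum.union_disjoint) auto
qed

lemma cnt0: "cnt 0 j v = (if v < Suc j then 1 else 0)"
proof -
  have "{j*2^0<..(j+1)*2^0} = {Suc j}" by auto
  then show ?thesis unfolding cnt_def by simp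
qed

lemma R_nonneg: assumes "sym_pos_def n D" shows "Rres n D e \<ge> 0"
proof -
  have c: "chi n e \<in> carrier_vec n" by (simp add: chi_def)
  have D: "D \<in> carrier_mat n n" using assms by (simp add: sym_pos_def_def)
  have z: "D *\<^sub>v 0\<^sub>v n = 0\<^sub>v n" using D
    by (intro eq_vecI) (auto simp: mult_mat_vec_def scalar_prod_def)
  from inv_lower[OF assms c, of "0\<^sub>v n"] z c show ?thesis
    by (simp add: Rres_def)
qed

lemma R_lower: assumes sp: "sym_pos_def n D" and ab: "a < n" "b < n"
  shows "Rres n D (a,b) \<ge> 2*(f a - f b) - qf n D f"
proof -
  have D: "D \<in> carrier_mat n n" using sp by (simp add: sym_pos_def_def)
  have c: "chi n (a,b) \<in> carrier_vec n" by (simp add: chi_def)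
  have z: "vec n f \<in> carrier_vec n" by simp
  from inv_lower[OF sp c z] show ?thesis
    unfolding Rres_def qf_vec[OF D] chi_dot[OF ab z] using ab by simp
qed

lemma qf_nonneg: assumes sp: "sym_pos_def n D" shows "qf n D f \<ge> 0"
proof -
  have D: "D \<in> carrier_mat n n" using sp by (simp add: sym_pos_def_def)
  have "vec n f \<bullet> (D *\<^sub>v vec n f) \<ge> 0"
    using sp by (cases "vec n f = 0\<^sub>v n") (auto simp: sym_pos_def_def less_imp_le)
  then show ?thesis using qf_vec[OF D] by simp
qed




lemma ed_bound: assumes "j < 2^(h-i)" "i \<le> h" shows "(j+1)*2^i \<le> (2::nat)^h"
proof -
  have "(j+1)*2^i \<le> 2^(h-i)*2^i" using assms by (intro mult_right_mono) auto
  also have "\<dots> = 2^h" using assms by (simp add: power_add[symmetric])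
  finally show ?thesis .
qed

lemma edges_range: "\<forall>e\<in>set (G_edges h k). fst e < nV h \<and> snd e < nV h"
proof
  fix e assume "e \<in> set (G_edges h k)"
  then consider (u) i where "1 \<le> i" "i < 2^h + 1" "e = (i - 1, i)"
    | (l) i j where "1 \<le> i" "i < h + 1" "j < 2^(h-i)" "e = ed i j"
    unfolding G_edges_split by (auto split: if_splits)
  then show "fst e < nV h \<and> snd e < nV h"
  proof cases
    case u then show ?thesis by (auto simp: nV_def)
  next
    case l
    then have "(j+1)*2^i \<le> (2::nat)^h" by (intro ed_bound) auto
    moreover have "j * 2^i \<le> (j+1)*2^i" by simp
    ultimately show ?thesis using l by (auto simp: nV_def ed_def)
  qed
qed

definition FF :: "nat \<Rightarrow> real mat \<Rightarrow> nat \<Rightarrow> nat \<Rightarrow> real" where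
  "FF h D n i = (\<Sum>j<2^(h-i). qf n D (cnt i j)) / 2^i"

lemma haar:
  assumes i: "i < h"
  shows "(\<Sum>m<2^(h - Suc i). qf n D (\<lambda>v. cnt i (2*m) v - cnt i (2*m+1) v)) / 2^(Suc i)
         = FF h D n i - FF h D n (Suc i)"
proof -
  let ?M = "2^(h - Suc i) :: nat"
  have M: "(2::nat)^(h-i) = 2 * ?M" using i by (metis Suc_diff_Suc power_Suc)
  have sp: "(\<lambda>v. cnt i (2*m) v + cnt i (2*m+1) v) = cnt (Suc i) m" for m
    by (rule ext) (simp add: cnt_split)
  have "(\<Sum>m<?M. qf n D (\<lambda>v. cnt i (2*m) v - cnt i (2*m+1) v))
      = (\<Sum>m<?M. 2 * qf n D (cnt i (2*m)) + 2 * qf n D (cnt i (2*m+1)) - qf n D (cnt (Suc i) m))"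
    by (intro sum.cong refl) (simp only: qf_parallel sp)
  also have "\<dots> = 2 * (\<Sum>m<?M. qf n D (cnt i (2*m)) + qf n D (cnt i (2*m+1))) - (\<Sum>m<?M. qf n D (cnt (Suc i) m))"
    by (simp add: sum_subtractf sum_distrib_left algebra_simps sum.distrib)
  also have "\<dots> = 2 * (\<Sum>j<2^(h-i). qf n D (cnt i j)) - (\<Sum>m<?M. qf n D (cnt (Suc i) m))"
    unfolding M using sum_pairs[of "\<lambda>j. qf n D (cnt i j)" ?M] by simp
  finally have e: "(\<Sum>m<?M. qf n D (\<lambda>v. cnt i (2*m) v - cnt i (2*m+1) v))
      = 2 * (\<Sum>j<2^(h-i). qf n D (cnt i j)) - (\<Sum>m<?M. qf n D (cnt (Suc i) m))" .
  show ?thesis unfolding e FF_def by (simp add: field_simps)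
qed




lemma level:
  fixes \<mu> :: real
  assumes sp: "sym_pos_def n D" and i: "1 \<le> i" "i < h" and nn: "2^h < n"
  shows "2^i * (\<Sum>j<2^(h-i). Rres n D (ed i j)) \<ge> 2^h * \<mu> - \<mu>^2 * (FF h D n i - FF h D n (Suc i))"
proof -
  define M :: nat where "M = 2^(h - Suc i)"
  have M: "(2::nat)^(h-i) = 2 * M" unfolding M_def using i by (metis Suc_diff_Suc power_Suc)
  have "(2::nat)^h = 2^i * 2^(h-i)" using i by (simp add: power_add[symmetric])
  then have hM: "(2::nat)^h = 2^i * (2 * M)" using M by simp
  define P :: real where "P = 2^i"
  have P: "P > 0" by (simp add: P_def)
  define l where "l = \<mu> / (2 * P)"
  define Q where "Q m = qf n D (\<lambda>v. cnt i (2*m) v - cnt i (2*m+1) v)" for m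
  have pair: "Rres n D (ed i (2*m)) + Rres n D (ed i (2*m+1)) \<ge> 4 * l * P - 2 * l^2 * Q m"
    if m: "m < M" for m
  proof -
    have "2*m+1 < 2^(h-i)" using m M by simp
    then have b2: "(2*m+1+1)*2^i \<le> (2::nat)^h" by (intro ed_bound) (use i in auto)
    have le: "2*m*2^i \<le> (2*m+1)*(2::nat)^i" "(2*m+1)*(2::nat)^i \<le> (2*m+1+1)*2^i" by simp_all
    have a1: "2*m*2^i < n" "(2*m+1)*2^i < n" "(2*m+1+1)*2^i < n" using b2 nn le by linarith+
    define f1 where "f1 v = l * (cnt i (2*m) v - cnt i (2*m+1) v)" for v
    define f2 where "f2 v = l * (cnt i (2*m+1) v - cnt i (2*m) v)" for v
    have R1: "Rres n D (2*m*2^i, (2*m+1)*2^i) \<ge> 2*(f1 (2*m*2^i) - f1 ((2*m+1)*2^i)) - qf n D f1"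
      by (rule R_lower[OF sp a1(1) a1(2)])
    have R2: "Rres n D ((2*m+1)*2^i, (2*m+1+1)*2^i) \<ge> 2*(f2 ((2*m+1)*2^i) - f2 ((2*m+1+1)*2^i)) - qf n D f2"
      by (rule R_lower[OF sp a1(2) a1(3)])
    have v1: "f1 (2*m*2^i) - f1 ((2*m+1)*2^i) = l * P"
      unfolding f1_def P_def by (simp add: cnt_hi cnt_lo)
    have v2: "f2 ((2*m+1)*2^i) - f2 ((2*m+1+1)*2^i) = l * P"
      unfolding f2_def P_def by (simp add: cnt_hi cnt_lo del: mult_Suc mult_Suc_right)
    have q1: "qf n D f1 = l^2 * Q m" unfolding f1_def Q_def by (rule qf_scale)
    have q2: "qf n D f2 = l^2 * Q m" unfolding f2_def Q_def qf_scale using qf_neg by metis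
    have e1: "ed i (2*m) = (2*m*2^i, (2*m+1)*2^i)" by (simp add: ed_def)
    have e2: "ed i (2*m+1) = ((2*m+1)*2^i, (2*m+1+1)*2^i)" by (simp add: ed_def)
    have "4 * l * P - 2 * l^2 * Q m = (2 * (l * P) - l^2 * Q m) + (2 * (l * P) - l^2 * Q m)" by (simp add: algebra_simps)
    then show ?thesis unfolding e1 e2 using R1 R2 unfolding v1 v2 q1 q2 by linarith
  qed
  have "(\<Sum>j<2^(h-i). Rres n D (ed i j)) = (\<Sum>m<M. Rres n D (ed i (2*m)) + Rres n D (ed i (2*m+1)))"
    unfolding M by (rule sum_pairs)
  also have "\<dots> \<ge> (\<Sum>m<M. 4 * l * P - 2 * l^2 * Q m)"
    by (intro sum_mono pair) simp
  finally have S: "(\<Sum>j<2^(h-i). Rres n D (ed i j)) \<ge> real M * (4 * l * P) - 2 * l^2 * (\<Sum>m<M. Q m)"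
    by (simp add: sum_subtractf sum_distrib_left)
  have H: "(\<Sum>m<M. Q m) = 2 * P * (FF h D n i - FF h D n (Suc i))"
    using haar[OF i(2), of n D] unfolding Q_def M_def P_def by (simp add: field_simps)
  have "2^i * (\<Sum>j<2^(h-i). Rres n D (ed i j)) \<ge> P * (real M * (4 * l * P) - 2 * l^2 * (2 * P * (FF h D n i - FF h D n (Suc i))))"
    using S H P unfolding P_def by (simp add: mult_left_mono)
  moreover have "P * (real M * (4 * l * P) - 2 * l^2 * (2 * P * (FF h D n i - FF h D n (Suc i))))
     = 2^h * \<mu> - \<mu>^2 * (FF h D n i - FF h D n (Suc i))"
  proof -
    have "(2::real)^h = P * (2 * real M)" unfolding P_def using hM
      by (metis of_nat_mult of_nat_numeral of_nat_power)
    then show ?thesis unfolding l_def using P by (simp add: field_simps power2_eq_square)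
  qed
  ultimately show ?thesis by simp
qed




theorem mainTheorem14:
  fixes h k :: nat and D :: "real mat"
  assumes "h > k" and "k > 2"
    and "sym_pos_def (nV h) D"
    and "cut_le (nV h) D (laplacian (nV h) (G_edges h k))"
  shows "Max {cut_avg (nV h) D (G_edges h k) S | S. S \<subseteq> {0..<nV h} \<and> S \<noteq> {} \<and> S \<noteq> {0..<nV h}}
           \<ge> real (h ^ 2) / (8 * real ((h + k) ^ 2))"
proof -
  define n where "n = nV h"
  define N :: nat where "N = 2^h"
  define E where "E = G_edges h k"
  define R where "R = Rres n D"
  have sp: "sym_pos_def n D" using assms(3) by (simp add: n_def)
  have cl: "cut_le n D (laplacian n E)" using assms(4) by (simp add: n_def E_def)
  have h4: "h \<ge> 4" using assms(1,2) by linarith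
  have nN: "n = N + 1" by (simp add: n_def N_def nV_def)
  have D: "D \<in> carrier_mat n n" using sp by (simp add: sym_pos_def_def)
  have Rnn: "R e \<ge> 0" for e unfolding R_def by (rule R_nonneg[OF sp])
  define A where "A = {cut_avg n D E S | S. S \<subseteq> {0..<n} \<and> S \<noteq> {} \<and> S \<noteq> {0..<n}}"
  have finA: "finite A"
  proof (rule finite_subset)
    show "A \<subseteq> (\<lambda>S. cut_avg n D E S) ` Pow {0..<n}" unfolding A_def by auto
  qed simp
  define X where "X s = (\<Sum>i\<in>{1..<h}. R (ed i (s div 2^i)))" for s
  have Xnn: "X s \<ge> 0" for s unfolding X_def by (intro sum_nonneg Rnn)
  have Sprop: "{0..<Suc s} \<subseteq> {0..<n} \<and> {0..<Suc s} \<noteq> {} \<and> {0..<Suc s} \<noteq> {0..<n}" if s: "s < N" for s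
  proof -
    have "N \<in> {0..<n}" "N \<notin> {0..<Suc s}" using s nN by auto
    then show ?thesis using s nN by auto
  qed
  have avg: "cut_avg n D E {0..<Suc s} \<ge> X s / real (h+k)" if s: "s < N" for s
  proof -
    define L where "L = length (cut_edges {0..<Suc s} E)"
    define Sm where "Sm = sum_list (map R (cut_edges {0..<Suc s} E))"
    have SX: "Sm \<ge> X s" unfolding Sm_def X_def E_def R_def
      by (rule sum_cut_lower) (use s N_def Rnn R_def in auto)
    have Lb: "L \<le> h + k" unfolding L_def E_def by (rule len_cut) (use s N_def in auto)
    have ca: "cut_avg n D E {0..<Suc s} = Sm / real L"
      by (simp add: cut_avg_def Sm_def L_def R_def)
    show ?thesis
    proof (cases "L = 0")
      case True
      then have "Sm = 0" unfolding Sm_def L_def by simp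
      then have "X s = 0" using SX Xnn[of s] by linarith
      then show ?thesis using ca True by simp
    next
      case False
      have "X s / real (h+k) \<le> Sm / real (h+k)" using SX by (simp add: divide_right_mono)
      also have "\<dots> \<le> Sm / real L"
        using False Lb SX Xnn[of s] by (intro divide_left_mono) auto
      finally show ?thesis using ca by simp
    qed
  qed
  have mx: "Max A \<ge> X s / real (h+k)" if s: "s < N" for s
  proof -
    have "cut_avg n D E {0..<Suc s} \<in> A" unfolding A_def using Sprop[OF s] by blast
    then have "Max A \<ge> cut_avg n D E {0..<Suc s}" using finA by (simp add: Max_ge)
    then show ?thesis using avg[OF s] by linarith
  qed
  have sumX: "real N * Max A \<ge> (\<Sum>s<N. X s) / real (h+k)"
  proof -
    have "(\<Sum>s<N. X s / real (h+k)) \<le> (\<Sum>s<N. Max A)" by (intro sum_mono mx) simp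
    then show ?thesis by (simp add: sum_divide_distrib)
  qed
  have swap: "(\<Sum>s<N. X s) = (\<Sum>i\<in>{1..<h}. 2^i * (\<Sum>j<2^(h-i). R (ed i j)))"
  proof -
    have "(\<Sum>s<N. X s) = (\<Sum>i\<in>{1..<h}. \<Sum>s<N. R (ed i (s div 2^i)))"
      unfolding X_def by (rule sum.swap)
    also have "\<dots> = (\<Sum>i\<in>{1..<h}. 2^i * (\<Sum>j<2^(h-i). R (ed i j)))"
    proof (intro sum.cong refl)
      fix i assume i: "i \<in> {1..<h}"
      have "N = 2^(h-i) * 2^i" using i unfolding N_def by (simp add: power_add[symmetric])
      then have "(\<Sum>s<N. R (ed i (s div 2^i))) = real (2^i) * (\<Sum>j<2^(h-i). R (ed i j))"
        using sum_div_group[of "2^i" "\<lambda>j. R (ed i j)" "2^(h-i)"] by simp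
      then show "(\<Sum>s<N. R (ed i (s div 2^i))) = 2^i * (\<Sum>j<2^(h-i). R (ed i j))" by simp
    qed
    finally show ?thesis .
  qed
  define \<mu> :: real where "\<mu> = (real h - 1) / (2 * (real h + real k))"
  have levs: "(\<Sum>i\<in>{1..<h}. 2^i * (\<Sum>j<2^(h-i). R (ed i j)))
      \<ge> (\<Sum>i\<in>{1..<h}. 2^h * \<mu> - \<mu>^2 * (FF h D n i - FF h D n (Suc i)))"
  proof (intro sum_mono)
    fix i assume i: "i \<in> {1..<h}"
    show "2^h * \<mu> - \<mu>^2 * (FF h D n i - FF h D n (Suc i)) \<le> 2^i * (\<Sum>j<2^(h-i). R (ed i j))"
      unfolding R_def by (rule level[OF sp]) (use i nN N_def in auto)
  qed
  have tel: "(\<Sum>i\<in>{1..<h}. 2^h * \<mu> - \<mu>^2 * (FF h D n i - FF h D n (Suc i)))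
      = (real h - 1) * 2^h * \<mu> - \<mu>^2 * (FF h D n 1 - FF h D n h)"
  proof -
    have "(\<Sum>i\<in>{1..<h}. 2^h * \<mu> - \<mu>^2 * (FF h D n i - FF h D n (Suc i)))
       = (\<Sum>i\<in>{1..<h}. 2^h * \<mu>) - \<mu>^2 * (\<Sum>i\<in>{1..<h}. FF h D n i - FF h D n (Suc i))"
      by (simp only: sum_subtractf sum_distrib_left[symmetric])
    also have "\<dots> = (real h - 1) * 2^h * \<mu> - \<mu>^2 * (FF h D n 1 - FF h D n h)"
      using telescope[of h "FF h D n"] h4 by (simp add: of_nat_diff)
    finally show ?thesis .
  qed
  have qD: "qf n D (cnt 0 s) \<le> real (h + k)" if s: "s < N" for s
  proof -
    have v: "vec n (cnt 0 s) = ind n {0..<Suc s}"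
      by (rule eq_vecI) (auto simp: ind_def cnt0)
    have "qf n D (cnt 0 s) = ind n {0..<Suc s} \<bullet> (D *\<^sub>v ind n {0..<Suc s})"
      using qf_vec[OF D, of "cnt 0 s"] v by simp
    also have "\<dots> \<le> ind n {0..<Suc s} \<bullet> (laplacian n E *\<^sub>v ind n {0..<Suc s})"
      using cl Sprop[OF s] unfolding cut_le_def by blast
    also have "\<dots> = real (length (cut_edges {0..<Suc s} E))"
      by (rule lap_ind) (use edges_range[of h k] Sprop[OF s] in \<open>auto simp: E_def n_def\<close>)
    also have "\<dots> \<le> real (h + k)" unfolding E_def using len_cut[of "Suc s" h k] s N_def by simp
    finally show ?thesis .
  qed
  have F0: "FF h D n 0 \<le> real N * real (h + k)"
  proof -
    have "FF h D n 0 = (\<Sum>j<N. qf n D (cnt 0 j))" by (simp add: FF_def N_def)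
    also have "\<dots> \<le> (\<Sum>j<N. real (h + k))" by (intro sum_mono qD) simp
    finally show ?thesis by simp
  qed
  have F1: "FF h D n 1 \<le> FF h D n 0"
  proof -
    have "0 \<le> (\<Sum>m<2^(h - Suc 0). qf n D (\<lambda>v. cnt 0 (2*m) v - cnt 0 (2*m+1) v)) / 2^(Suc 0)"
      by (intro divide_nonneg_pos sum_nonneg qf_nonneg[OF sp]) auto
    then show ?thesis using haar[of 0 h n D] h4 by simp
  qed
  have Fh: "FF h D n h \<ge> 0" unfolding FF_def by (intro divide_nonneg_pos sum_nonneg qf_nonneg[OF sp]) auto
  define H where "H = real h"
  define K where "K = real k"
  define NN where "NN = real N"
  have NN: "NN > 0" by (simp add: NN_def N_def)
  have HK: "H + K > 0" using h4 by (simp add: H_def K_def)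
  have SX: "(\<Sum>s<N. X s) \<ge> (H - 1) * NN * \<mu> - \<mu>^2 * (NN * (H + K))"
  proof -
    have "\<mu>^2 * (FF h D n 1 - FF h D n h) \<le> \<mu>^2 * (NN * (H + K))"
      using F0 F1 Fh by (intro mult_left_mono) (auto simp: NN_def H_def K_def)
    moreover have "(2::real)^h = NN" by (simp add: NN_def N_def)
    ultimately show ?thesis using swap levs tel by (simp add: H_def)
  qed
  have c: "(H - 1) * NN * \<mu> - \<mu>^2 * (NN * (H + K)) = NN * ((H - 1)^2 / (4 * (H + K)))"
  proof -
    have mu: "\<mu> = (H - 1) / (2 * (H + K))" by (simp add: \<mu>_def H_def K_def)
    have gen: "a * NN * (a / (2 * b)) - (a / (2 * b))^2 * (NN * b) = NN * (a^2 / (4 * b))"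
      if "b > 0" for a b :: real using that by (simp add: field_simps power2_eq_square)
    show ?thesis unfolding mu using gen[OF HK, of "H - 1"] by simp
  qed
  have "NN * Max A \<ge> NN * ((H - 1)^2 / (4 * (H + K))) / (H + K)"
  proof -
    have "NN * ((H - 1)^2 / (4 * (H + K))) / (H + K) \<le> (\<Sum>s<N. X s) / (H + K)"
    proof (rule divide_right_mono)
      show "NN * ((H - 1)^2 / (4 * (H + K))) \<le> (\<Sum>s<N. X s)" using SX c by linarith
    qed (use HK in auto)
    then show ?thesis using sumX by (simp add: NN_def H_def K_def)
  qed
  moreover have "NN * ((H - 1)^2 / (4 * (H + K))) / (H + K) = NN * ((H - 1)^2 / (4 * (H + K)^2))"
    using HK by (simp add: power2_eq_square)
  ultimately have "NN * ((H - 1)^2 / (4 * (H + K)^2)) \<le> NN * Max A" by linarith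
  then have M1: "Max A \<ge> (H - 1)^2 / (4 * (H + K)^2)"
    using NN by (rule mult_left_le_imp_le)
  have hh: "H^2 / 2 \<le> (H - 1)^2"
  proof -
    have "H * (H - 4) \<ge> 0" using h4 by (simp add: H_def)
    then show ?thesis by (simp add: power2_eq_square algebra_simps)
  qed
  have "H^2 / (8 * (H + K)^2) = (H^2 / 2) / (4 * (H + K)^2)" by simp
  also have "\<dots> \<le> (H - 1)^2 / (4 * (H + K)^2)" using hh HK by (intro divide_right_mono) auto
  finally have "Max A \<ge> H^2 / (8 * (H + K)^2)" using M1 by linarith
  then show ?thesis unfolding A_def n_def E_def H_def K_def by simp
qed


end
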